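(* Let $\mathbf{T}\in\{0,1\}^{n\times\ell}$ be a matrix with $\delta(\mathbf{T})\le 3$ and $|\mathcal{T}_3|\ge 5$. Then there exist $j_1\ne j_2\in[\ell]$ such that: $T_1\subseteq\{j_1,j_2\}$ for each $T_1\in\mathcal{T}_1$; $T_2\cap\{j_1,j_2\}\ne\emptyset$ for each $T_2\in\mathcal{T}_2$; and $\{j_1,j_2\}\subseteq T_3$ for each $T_3\in\mathcal{T}_3$. Moreover, with $\mathcal{T}_2'=\{T_2\in\mathcal{T}_2: j_1\in T_2,\ j_2\notin T_2\}$ and $\mathcal{T}_2''=\{T_2\in\mathcal{T}_2: j_1\notin T_2,\ j_2\in T_2\}$, exactly one of the following holds: (a) $\mathcal{T}_2'=\emptyset$ or $\mathcal{T}_2''=\emptyset$; (b) there is $j_3\in[\ell]$ with $\mathcal{T}_2'=\{\{j_1,j_3\}\}$ and $\mathcal{T}_2''=\{\{j_2,j_3\}\}$.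
   Context: For rows $u,w\in\{0,1\}^\ell$, $D(u,w)=\{j:u[j]\ne w[j]\}$ and $d(u,w)=|D(u,w)|$; $\delta(\mathbf{T})=\max_{i\ne i'}d(\mathbf{T}[i],\mathbf{T}[i'])$, where $\mathbf{T}[i]$ is the $i$-th row. For $x\in\mathbb{N}$, $\mathcal{T}_x$ is the set system (without duplicates) $\{D(\mathbf{T}[i],\mathbf{T}[n]): i\in[n-1],\ d(\mathbf{T}[i],\mathbf{T}[n])=x\}$. *)

theory Defs
  imports Main
begin

text \<open>A binary n x l matrix is modelled as T :: nat => nat => bool, with rows
  indexed by 1..n and columns by 1..l (True = 1, False = 0). Row i is T i.\<close>

definition Dset :: "nat \<Rightarrow> (nat \<Rightarrow> bool) \<Rightarrow> (nat \<Rightarrow> bool) \<Rightarrow> nat set" where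
  "Dset l u w = {j \<in> {1..l}. u j \<noteq> w j}"

definition dist01 :: "nat \<Rightarrow> (nat \<Rightarrow> bool) \<Rightarrow> (nat \<Rightarrow> bool) \<Rightarrow> nat" where
  "dist01 l u w = card (Dset l u w)"

definition delta :: "nat \<Rightarrow> nat \<Rightarrow> (nat \<Rightarrow> nat \<Rightarrow> bool) \<Rightarrow> nat" where
  "delta n l T = Max ({0} \<union> {dist01 l (T i) (T i') | i i'.
      i \<in> {1..n} \<and> i' \<in> {1..n} \<and> i \<noteq> i'})"

definition calT :: "nat \<Rightarrow> nat \<Rightarrow> (nat \<Rightarrow> nat \<Rightarrow> bool) \<Rightarrow> nat \<Rightarrow> nat set set" where
  "calT n l T x = {Dset l (T i) (T n) | i. i \<in> {1..n-1} \<and> dist01 l (T i) (T n) = x}"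

end

theory Submission
  imports Defs
begin

lemma sd_card:
  assumes "finite A" "finite B"
  shows "card ((A-B) \<union> (B-A)) + 2 * card (A \<inter> B) = card A + card B"
proof -
  have "card ((A-B) \<union> (B-A)) = card (A-B) + card (B-A)"
    by (rule card_Un_disjoint) (use assms in auto)
  moreover have "card A = card (A \<inter> B) + card (A-B)"
    using assms card_Int_Diff by blast
  moreover have "card B = card (B \<inter> A) + card (B-A)"
    using assms card_Int_Diff by blast
  moreover have "B \<inter> A = A \<inter> B" by auto
  ultimately show ?thesis by simp
qed

lemma main_comb:
  fixes F :: "nat set set" and l :: nat
  assumes sub: "\<forall>A\<in>F. A \<subseteq> {1..l}"
   and d3: "\<forall>A\<in>F. \<forall>B\<in>F. A \<noteq> B \<longrightarrow> card ((A-B) \<union> (B-A)) \<le> 3"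
   and c5: "card {A\<in>F. card A = 3} \<ge> 5"
  shows "\<exists>j1 j2. j1 \<in> {1..l} \<and> j2 \<in> {1..l} \<and> j1 \<noteq> j2
     \<and> (\<forall>S \<in> {A\<in>F. card A = 1}. S \<subseteq> {j1, j2})
     \<and> (\<forall>S \<in> {A\<in>F. card A = 2}. S \<inter> {j1, j2} \<noteq> {})
     \<and> (\<forall>S \<in> {A\<in>F. card A = 3}. {j1, j2} \<subseteq> S)
     \<and> (let T2' = {S \<in> {A\<in>F. card A = 2}. j1 \<in> S \<and> j2 \<notin> S};
            T2'' = {S \<in> {A\<in>F. card A = 2}. j1 \<notin> S \<and> j2 \<in> S}
        in ((T2' = {} \<or> T2'' = {}) \<noteq>
            (\<exists>j3 \<in> {1..l}. T2' = {{j1, j3}} \<and> T2'' = {{j2, j3}})))"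
proof -
  define T3 where "T3 = {A\<in>F. card A = 3}"
  have fin: "finite A" if "A \<in> F" for A
  proof -
    have "A \<subseteq> {1..l}" using sub that by blast
    then show ?thesis by (rule finite_subset) simp
  qed
  have finT3: "finite T3"
  proof (rule ccontr)
    assume "infinite T3"
    then have "card T3 = 0" by simp
    then show False using c5 T3_def by simp
  qed
  have int2: "card (A \<inter> B) = 2" if "A \<in> T3" "B \<in> T3" "A \<noteq> B" for A B
  proof -
    have "card ((A-B) \<union> (B-A)) + 2 * card (A \<inter> B) = 6"
      using sd_card[of A B] fin that T3_def by auto
    moreover have "card ((A-B) \<union> (B-A)) \<le> 3" using d3 that T3_def by auto
    moreover have "card (A \<inter> B) \<noteq> 3"
    proof
      assume h: "card (A \<inter> B) = 3"
      have "A \<inter> B = A" using card_subset_eq[of A "A \<inter> B"] fin that T3_def h by auto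
      moreover have "A \<inter> B = B" using card_subset_eq[of B "A \<inter> B"] fin that T3_def h by auto
      ultimately show False using that by auto
    qed
    moreover have "card (A \<inter> B) \<le> 3"
      using card_mono[of A "A \<inter> B"] fin that T3_def by auto
    ultimately show ?thesis by linarith
  qed
  have cT3: "card T3 \<ge> 5" using c5 T3_def by simp
  then have "T3 \<noteq> {}" by auto
  then obtain A where A: "A \<in> T3" by blast
  have "card (T3 - {A}) \<ge> 4" using cT3 A finT3 card_Diff_singleton[of A T3] by simp
  then have "T3 - {A} \<noteq> {}" by (intro notI) simp
  then obtain B where B: "B \<in> T3" "B \<noteq> A" by blast
  define P where "P = A \<inter> B"
  have cP: "card P = 2" using int2 A B P_def by auto
  have finA: "finite A" "finite B" using A B fin T3_def by auto
  have allP: "\<forall>C\<in>T3. P \<subseteq> C"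
  proof (rule ccontr)
    assume "\<not> (\<forall>C\<in>T3. P \<subseteq> C)"
    then obtain C0 where C0: "C0 \<in> T3" "\<not> P \<subseteq> C0" by blast
    define E where "E = A \<union> B"
    have CE: "C \<subseteq> E" if C: "C \<in> T3" "\<not> P \<subseteq> C" for C
    proof (rule ccontr)
      assume "\<not> C \<subseteq> E"
      then obtain x where x: "x \<in> C" "x \<notin> E" by blast
      have "C \<noteq> A" "C \<noteq> B" using C P_def by auto
      then have cA: "card (C \<inter> A) = 2" and cB: "card (C \<inter> B) = 2"
        using int2 A B C by auto
      have finC: "finite C" using C fin T3_def by auto
      have cx: "card (C - {x}) = 2" using C x T3_def finC by auto
      have "C \<inter> A = C - {x}"
        using card_subset_eq[of "C - {x}" "C \<inter> A"] finC cx cA x E_def by auto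
      moreover have "C \<inter> B = C - {x}"
        using card_subset_eq[of "C - {x}" "C \<inter> B"] finC cx cB x E_def by auto
      ultimately have "C - {x} \<subseteq> P" using P_def by auto
      then have "C - {x} = P" using card_subset_eq[of P "C - {x}"] cP cx finA P_def by auto
      then show False using C by auto
    qed
    have allE: "D \<subseteq> E" if D: "D \<in> T3" for D
    proof (cases "P \<subseteq> D")
      case False then show ?thesis using CE D by auto
    next
      case True
      show ?thesis
      proof (rule ccontr)
        assume "\<not> D \<subseteq> E"
        then obtain d where d: "d \<in> D" "d \<notin> E" by blast
        have "D \<noteq> C0" using True C0 by auto
        then have cDC: "card (D \<inter> C0) = 2" using int2 D C0 by auto
        have finD: "finite D" using D fin T3_def by auto
        have cd: "card (D - {d}) = 2" using D d T3_def finD by auto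
        have "P \<subseteq> D - {d}" using True d P_def E_def by auto
        then have Pd: "D - {d} = P" using card_subset_eq[of "D - {d}" P] cP cd finD by auto
        have "C0 \<subseteq> E" using CE C0 by auto
        then have "D \<inter> C0 \<subseteq> P" using Pd d by auto
        then have "D \<inter> C0 = P" using card_subset_eq[of P "D \<inter> C0"] cP cDC finA P_def by auto
        then show False using C0 by auto
      qed
    qed
    have cE: "card E = 4"
      using card_Un_Int[of A B] finA A B T3_def cP P_def E_def by auto
    have "T3 \<subseteq> {X. X \<subseteq> E \<and> card X = 3}" using allE T3_def by auto
    then have "card T3 \<le> card {X. X \<subseteq> E \<and> card X = 3}"
      by (rule card_mono[rotated]) (simp add: E_def finA)
    also have "\<dots> = 4" using n_subsets[of E 3] cE finA E_def by (simp add: numeral_eq_Suc)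
    finally show False using c5 T3_def by auto
  qed
  obtain j1 j2 where j12: "P = {j1, j2}" "j1 \<noteq> j2" using cP by (auto simp: card_Suc_eq numeral_eq_Suc)
  have Asub: "A \<subseteq> {1..l}" using A sub unfolding T3_def by blast
  have "P \<subseteq> {1..l}" using Asub unfolding P_def by blast
  then have jl: "j1 \<in> {1..l}" "j2 \<in> {1..l}" unfolding j12 by simp_all
  have nodisj: False if S: "S \<in> F" "card S = 1 \<or> card S = 2" "S \<inter> P = {}" for S
  proof -
    have finS: "finite S" using S fin by auto
    have "T3 \<subseteq> (\<lambda>c. insert c P) ` S"
    proof
      fix C assume C: "C \<in> T3"
      have "S \<noteq> C" using S C T3_def by auto
      then have "card ((S-C) \<union> (C-S)) \<le> 3" using d3 S C T3_def by auto
      moreover have "card ((S-C) \<union> (C-S)) + 2 * card (S \<inter> C) = card S + 3"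
        using sd_card[of S C] finS fin C T3_def by auto
      ultimately have "card (S \<inter> C) \<noteq> 0" using S by auto
      then obtain c where c: "c \<in> S" "c \<in> C" by (metis card.empty disjoint_iff)
      have finC: "finite C" using C fin T3_def by auto
      have cnp: "c \<notin> P" using c S by auto
      have "insert c P \<subseteq> C" using c allP C by auto
      moreover have "card (insert c P) = 3" using cnp cP finA P_def by auto
      ultimately have "C = insert c P" using card_subset_eq[of C "insert c P"] finC C T3_def by auto
      then show "C \<in> (\<lambda>c. insert c P) ` S" using c by auto
    qed
    then have "card T3 \<le> card ((\<lambda>c. insert c P) ` S)"
      by (rule card_mono[rotated]) (simp add: finS)
    also have "\<dots> \<le> card S" by (rule card_image_le[OF finS])
    finally show False using S c5 T3_def by auto
  qed
  have part1: "\<forall>S \<in> {A\<in>F. card A = 1}. S \<subseteq> {j1, j2}"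
  proof
    fix S assume S: "S \<in> {A\<in>F. card A = 1}"
    then obtain x where x: "S = {x}" by (auto simp: card_Suc_eq)
    show "S \<subseteq> {j1, j2}"
    proof (rule ccontr)
      assume "\<not> S \<subseteq> {j1, j2}"
      then have "S \<inter> P = {}" using x j12 by auto
      then show False using nodisj S by auto
    qed
  qed
  have part2: "\<forall>S \<in> {A\<in>F. card A = 2}. S \<inter> {j1, j2} \<noteq> {}"
    using nodisj j12 by auto
  have part3: "\<forall>S \<in> {A\<in>F. card A = 3}. {j1, j2} \<subseteq> S"
    using allP j12 T3_def by auto
  define T2' where "T2' = {S \<in> {A\<in>F. card A = 2}. j1 \<in> S \<and> j2 \<notin> S}"
  define T2'' where "T2'' = {S \<in> {A\<in>F. card A = 2}. j1 \<notin> S \<and> j2 \<in> S}"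
  have pair: "\<exists>z. S = {j1, z} \<and> S' = {j2, z} \<and> z \<noteq> j1 \<and> z \<noteq> j2"
    if S: "S \<in> T2'" and S': "S' \<in> T2''" for S S'
  proof -
    have SF: "S \<in> F" "card S = 2" "j1 \<in> S" "j2 \<notin> S" using S T2'_def by auto
    have SF': "S' \<in> F" "card S' = 2" "j1 \<notin> S'" "j2 \<in> S'" using S' T2''_def by auto
    have "S \<noteq> S'" using SF SF' by auto
    then have "card ((S-S') \<union> (S'-S)) \<le> 3" using d3 SF SF' by auto
    moreover have "card ((S-S') \<union> (S'-S)) + 2 * card (S \<inter> S') = 4"
      using sd_card[of S S'] fin SF SF' by auto
    ultimately have "card (S \<inter> S') \<noteq> 0" by auto
    then obtain z where z: "z \<in> S" "z \<in> S'" by (metis card.empty disjoint_iff)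
    have zn: "z \<noteq> j1" "z \<noteq> j2" using z SF SF' by auto
    have "S = {j1, z}"
      using card_subset_eq[of S "{j1, z}"] fin SF z zn by auto
    moreover have "S' = {j2, z}"
      using card_subset_eq[of S' "{j2, z}"] fin SF' z zn by auto
    ultimately show ?thesis using zn by auto
  qed
  have part4: "(T2' = {} \<or> T2'' = {}) \<noteq>
            (\<exists>j3 \<in> {1..l}. T2' = {{j1, j3}} \<and> T2'' = {{j2, j3}})"
  proof (cases "T2' = {} \<or> T2'' = {}")
    case True then show ?thesis by auto
  next
    case False
    then obtain S0 S0' where S0: "S0 \<in> T2'" "S0' \<in> T2''" by blast
    then obtain z where z: "S0 = {j1, z}" "S0' = {j2, z}" "z \<noteq> j1" "z \<noteq> j2"
      using pair by blast
    have zl: "z \<in> {1..l}" using S0 z sub T2'_def by auto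
    have "T2' = {{j1, z}}"
    proof
      show "T2' \<subseteq> {{j1, z}}"
      proof
        fix S assume S: "S \<in> T2'"
        obtain z' where "S = {j1, z'}" "S0' = {j2, z'}" "z' \<noteq> j2"
          using pair[OF S S0(2)] by blast
        then show "S \<in> {{j1, z}}" using z by (auto simp: doubleton_eq_iff)
      qed
    qed (use S0 z in auto)
    moreover have "T2'' = {{j2, z}}"
    proof
      show "T2'' \<subseteq> {{j2, z}}"
      proof
        fix S assume S: "S \<in> T2''"
        obtain z' where "S0 = {j1, z'}" "S = {j2, z'}" "z' \<noteq> j1"
          using pair[OF S0(1) S] by blast
        then show "S \<in> {{j2, z}}" using z by (auto simp: doubleton_eq_iff)
      qed
    qed (use S0 z in auto)
    ultimately show ?thesis using False zl by auto
  qed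
  show ?thesis
    apply (rule exI[of _ j1], rule exI[of _ j2])
    apply (unfold Let_def T2'_def[symmetric] T2''_def[symmetric])
    apply (intro conjI)
    apply (fact jl(1))
    apply (fact jl(2))
    apply (fact j12(2))
    apply (fact part1)
    apply (fact part2)
    apply (fact part3)
    apply (fact part4)
    done
qed

lemma calT_eq:
  "calT n l T x = {A \<in> {Dset l (T i) (T n) | i. i \<in> {1..n-1}}. card A = x}"
  unfolding calT_def dist01_def by auto

theorem lemma16:
  fixes n l :: nat and T :: "nat \<Rightarrow> nat \<Rightarrow> bool"
  assumes "delta n l T \<le> 3"
    and "card (calT n l T 3) \<ge> 5"
  shows "\<exists>j1 j2. j1 \<in> {1..l} \<and> j2 \<in> {1..l} \<and> j1 \<noteq> j2
     \<and> (\<forall>S \<in> calT n l T 1. S \<subseteq> {j1, j2})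
     \<and> (\<forall>S \<in> calT n l T 2. S \<inter> {j1, j2} \<noteq> {})
     \<and> (\<forall>S \<in> calT n l T 3. {j1, j2} \<subseteq> S)
     \<and> (let T2' = {S \<in> calT n l T 2. j1 \<in> S \<and> j2 \<notin> S};
            T2'' = {S \<in> calT n l T 2. j1 \<notin> S \<and> j2 \<in> S}
        in ((T2' = {} \<or> T2'' = {}) \<noteq>
            (\<exists>j3 \<in> {1..l}. T2' = {{j1, j3}} \<and> T2'' = {{j2, j3}})))"
proof -
  define F where "F = {Dset l (T i) (T n) | i. i \<in> {1..n-1}}"
  have sub: "\<forall>A\<in>F. A \<subseteq> {1..l}" unfolding F_def Dset_def by auto
  have fs: "finite {dist01 l (T i) (T i') | i i'. i \<in> {1..n} \<and> i' \<in> {1..n} \<and> i \<noteq> i'}"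
  proof -
    have "{dist01 l (T i) (T i') | i i'. i \<in> {1..n} \<and> i' \<in> {1..n} \<and> i \<noteq> i'}
        \<subseteq> (\<lambda>(i, i'). dist01 l (T i) (T i')) ` ({1..n} \<times> {1..n})" by auto
    then show ?thesis by (rule finite_subset) auto
  qed
  have d3: "\<forall>A\<in>F. \<forall>B\<in>F. A \<noteq> B \<longrightarrow> card ((A-B) \<union> (B-A)) \<le> 3"
  proof (intro ballI impI)
    fix A B assume A: "A \<in> F" and B: "B \<in> F" and AB: "A \<noteq> B"
    obtain i where i: "i \<in> {1..n-1}" "A = Dset l (T i) (T n)" using A F_def by auto
    obtain i' where i': "i' \<in> {1..n-1}" "B = Dset l (T i') (T n)" using B F_def by auto
    have ne: "i \<noteq> i'" using i i' AB by auto
    have eq: "Dset l (T i) (T i') = (A-B) \<union> (B-A)" using i i' unfolding Dset_def by auto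
    have "dist01 l (T i) (T i') \<le> delta n l T"
      unfolding delta_def using fs i i' ne by (intro Max_ge) auto
    then show "card ((A-B) \<union> (B-A)) \<le> 3" using assms(1) eq dist01_def by auto
  qed
  have c5: "card {A\<in>F. card A = 3} \<ge> 5" using assms(2) unfolding calT_eq F_def .
  show ?thesis unfolding calT_eq F_def[symmetric] by (rule main_comb[OF sub d3 c5])
qed

end
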